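(* There is an absolute constant $c>0$ such that for every $n\ge 2$ and every graph $H$ on $n$ vertices with at least one edge, $Q(f_{[H]}) \ge c\, n$.
   Context: A homomorphism from a graph $H$ to a graph $G$ is a map $h:V(H)\to V(G)$ (not necessarily injective) such that $\{h(u),h(v)\}\in E(G)$ whenever $\{u,v\}\in E(H)$ (graphs are simple, so in particular $h(u)\ne h(v)$ for adjacent $u,v$). For a fixed graph $H$ on $n$ vertices, $f_{[H]}:\{0,1\}^{\binom n2}\to\{0,1\}$ takes as input a graph $G$ on vertex set $[n]$ given by its edge-indicator bits, and $f_{[H]}(G)=1$ iff $H$ admits a homomorphism into $G$. $Q(f)$ denotes the bounded-error (success probability at least $2/3$) quantum query complexity of a Boolean function $f$. *)

theory Defs
  imports Complex_Main "Jordan_Normal_Form.Matrix"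
begin

text \<open>Inputs are subsets x of a finite index set I (x is the set of
variables equal to 1). An algorithm with T queries acting on C^d consists of
unitaries U 0, ..., U T (independent of the input), a labelling lab of the
computational basis states by the queried variable (None = no query), and an
accepting set acc of basis states.\<close>

definition cadj :: "complex mat \<Rightarrow> complex mat" where
  "cadj A = mat (dim_col A) (dim_row A) (\<lambda>(i,j). cnj (A $$ (j,i)))"

definition unitary_mat :: "nat \<Rightarrow> complex mat \<Rightarrow> bool" where
  "unitary_mat d U \<longleftrightarrow> U \<in> carrier_mat d d \<and> U * cadj U = 1\<^sub>m d \<and> cadj U * U = 1\<^sub>m d"

definition oracle_mat :: "nat \<Rightarrow> (nat \<Rightarrow> 'i option) \<Rightarrow> 'i set \<Rightarrow> complex mat" where
  "oracle_mat d lab x = mat d d (\<lambda>(j,k). if j = k then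
       (case lab j of Some i \<Rightarrow> if i \<in> x then -1 else 1 | None \<Rightarrow> 1) else 0)"

fun qstate :: "nat \<Rightarrow> (nat \<Rightarrow> complex mat) \<Rightarrow> (nat \<Rightarrow> 'i option) \<Rightarrow> 'i set \<Rightarrow> nat \<Rightarrow> complex vec" where
  "qstate d U lab x 0 = U 0 *\<^sub>v unit_vec d 0"
| "qstate d U lab x (Suc t) = U (Suc t) *\<^sub>v (oracle_mat d lab x *\<^sub>v qstate d U lab x t)"

definition accept_prob :: "nat \<Rightarrow> (nat \<Rightarrow> complex mat) \<Rightarrow> (nat \<Rightarrow> 'i option) \<Rightarrow> nat set
    \<Rightarrow> nat \<Rightarrow> 'i set \<Rightarrow> real" where
  "accept_prob d U lab acc T x = (\<Sum>j\<in>acc \<inter> {..<d}. (cmod (qstate d U lab x T $ j))\<^sup>2)"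

definition computes_bounded_error ::
  "'i set \<Rightarrow> ('i set \<Rightarrow> bool) \<Rightarrow> nat \<Rightarrow> nat \<Rightarrow> (nat \<Rightarrow> complex mat) \<Rightarrow> (nat \<Rightarrow> 'i option)
     \<Rightarrow> nat set \<Rightarrow> bool" where
  "computes_bounded_error I f T d U lab acc \<longleftrightarrow>
     d > 0 \<and> (\<forall>t\<le>T. unitary_mat d (U t)) \<and> (\<forall>j<d. \<forall>i. lab j = Some i \<longrightarrow> i \<in> I) \<and>
     (\<forall>x. x \<subseteq> I \<longrightarrow>
        (f x \<longrightarrow> accept_prob d U lab acc T x \<ge> 2/3) \<and>
        (\<not> f x \<longrightarrow> 1 - accept_prob d U lab acc T x \<ge> 2/3))"

definition Q :: "'i set \<Rightarrow> ('i set \<Rightarrow> bool) \<Rightarrow> nat" where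
  "Q I f = (LEAST T. \<exists>d U lab acc. computes_bounded_error I f T d U lab acc)"

text \<open>Possible edges of a simple graph on vertex set {0..<n} (standing for [n]);
a graph is a set of such edges.\<close>
definition all_edges :: "nat \<Rightarrow> nat set set" where
  "all_edges n = {{u, v} | u v. u < n \<and> v < n \<and> u \<noteq> v}"

definition has_hom :: "nat \<Rightarrow> nat set set \<Rightarrow> nat set set \<Rightarrow> bool" where
  "has_hom n EH EG \<longleftrightarrow> (\<exists>h. (\<forall>u<n. h u < n) \<and>
      (\<forall>u v. {u, v} \<in> EH \<longrightarrow> {h u, h v} \<in> EG))"

definition f_hom :: "nat \<Rightarrow> nat set set \<Rightarrow> nat set set \<Rightarrow> bool" where
  "f_hom n EH = (\<lambda>EG. has_hom n EH EG)"

end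

theory Submission
  imports Defs "HOL-Analysis.L2_Norm" "HOL-Library.Nat_Bijection"
begin


definition ov :: "(nat \<Rightarrow> 'i option) \<Rightarrow> 'i set \<Rightarrow> nat \<Rightarrow> complex" where
  "ov lab x j = (case lab j of Some i \<Rightarrow> if i \<in> x then -1 else 1 | None \<Rightarrow> 1)"

lemma mv_sum: "A \<in> carrier_mat d d \<Longrightarrow> dim_vec v = d \<Longrightarrow> i < d \<Longrightarrow>
   (A *\<^sub>v v) $ i = (\<Sum>j<d. A $$ (i,j) * v $ j)"
  by (auto simp: scalar_prod_def atLeast0LessThan intro!: sum.cong)

lemma oracle_carrier: "oracle_mat d lab x \<in> carrier_mat d d"
  by (simp add: oracle_mat_def)

lemma oracle_apply: "dim_vec v = d \<Longrightarrow> j < d \<Longrightarrow>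
   (oracle_mat d lab x *\<^sub>v v) $ j = ov lab x j * v $ j"
  apply (subst mv_sum[OF oracle_carrier], assumption+)
  apply (simp add: oracle_mat_def ov_def)
  apply (subst sum.cong[OF refl, of _ _ "\<lambda>k. if j = k then (case lab j of None \<Rightarrow> 1
                       | Some i \<Rightarrow> if i \<in> x then - 1 else 1) * v $ k else 0"])
  apply auto
  done

lemma qstate_dim: "(\<And>t. t \<le> T \<Longrightarrow> U t \<in> carrier_mat d d) \<Longrightarrow> t \<le> T \<Longrightarrow>
   dim_vec (qstate d U lab x t) = d"
  by (induction t) (auto simp: oracle_mat_def)

lemma sum_swap3: "(\<Sum>i\<in>A. \<Sum>k\<in>B. \<Sum>j\<in>C. f i k j) = (\<Sum>k\<in>B. \<Sum>j\<in>C. \<Sum>i\<in>A. f i k j)"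
proof -
  have "(\<Sum>i\<in>A. \<Sum>k\<in>B. \<Sum>j\<in>C. f i k j) = (\<Sum>k\<in>B. \<Sum>i\<in>A. \<Sum>j\<in>C. f i k j)" by (rule sum.swap)
  also have "\<dots> = (\<Sum>k\<in>B. \<Sum>j\<in>C. \<Sum>i\<in>A. f i k j)" by (rule sum.cong[OF refl], rule sum.swap)
  finally show ?thesis .
qed

lemma cns: "complex_of_real ((cmod z)^2) = cnj z * z"
  by (metis complex_norm_square mult.commute)

lemma unitary_sq:
  assumes U: "unitary_mat d U" and v: "dim_vec v = d"
  shows "(\<Sum>i<d. (cmod ((U *\<^sub>v v) $ i))\<^sup>2) = (\<Sum>j<d. (cmod (v $ j))\<^sup>2)"
proof -
  have Uc: "U \<in> carrier_mat d d" and UU: "cadj U * U = 1\<^sub>m d" using U unfolding unitary_mat_def by auto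
  have key: "(\<Sum>i<d. cnj (U$$(i,k)) * U$$(i,j)) = (if k = j then 1 else 0)" if "k<d" "j<d" for k j
  proof -
    have "(cadj U * U) $$ (k,j) = (if k = j then 1 else 0)" using UU that by simp
    moreover have "(cadj U * U) $$ (k,j) = (\<Sum>i<d. cnj (U$$(i,k)) * U$$(i,j))"
      using Uc that by (simp add: cadj_def scalar_prod_def atLeast0LessThan)
    ultimately show ?thesis by simp
  qed
  have "complex_of_real (\<Sum>i<d. (cmod ((U *\<^sub>v v) $ i))\<^sup>2)
      = (\<Sum>i<d. cnj ((U *\<^sub>v v) $ i) * ((U *\<^sub>v v) $ i))"
    by (simp only: of_real_sum cns)
  also have "\<dots> = (\<Sum>i<d. (\<Sum>k<d. cnj (U$$(i,k)) * cnj (v$k)) * (\<Sum>j<d. U$$(i,j) * v$j))"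
    using mv_sum[OF Uc v] by simp
  also have "\<dots> = (\<Sum>i<d. \<Sum>k<d. \<Sum>j<d. (cnj (v$k) * v$j) * (cnj (U$$(i,k)) * U$$(i,j)))"
    apply (simp add: sum_product algebra_simps)
    apply (rule sum.cong[OF refl])
    apply (subst sum.swap)
    apply (simp add: algebra_simps)
    done
  also have "\<dots> = (\<Sum>k<d. \<Sum>j<d. (cnj (v$k) * v$j) * (\<Sum>i<d. cnj (U$$(i,k)) * U$$(i,j)))"
    apply (subst sum_swap3)
    apply (simp add: sum_distrib_left)
    done
  also have "\<dots> = (\<Sum>k<d. cnj (v$k) * v$k)"
    by (simp add: key if_distrib cong: if_cong)
  also have "\<dots> = complex_of_real (\<Sum>j<d. (cmod (v $ j))\<^sup>2)"
    by (simp only: of_real_sum cns)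
  finally show ?thesis using of_real_eq_iff by blast
qed

lemma ov_cmod: "cmod (ov lab x j) = 1"
  by (auto simp: ov_def split: option.splits)

lemma L2_sq: "(L2_set f A)^2 = (\<Sum>i\<in>A. (f i)^2)"
  unfolding L2_set_def by (simp add: sum_nonneg)

lemma cb_facts:
  assumes "computes_bounded_error I f T d U lab acc"
  shows "d > 0" "\<And>t. t \<le> T \<Longrightarrow> unitary_mat d (U t)" "\<And>t. t \<le> T \<Longrightarrow> U t \<in> carrier_mat d d"
    "\<And>x. x \<subseteq> I \<Longrightarrow> f x \<Longrightarrow> accept_prob d U lab acc T x \<ge> 2/3"
    "\<And>x. x \<subseteq> I \<Longrightarrow> \<not> f x \<Longrightarrow> accept_prob d U lab acc T x \<le> 1/3"
  using assms unfolding computes_bounded_error_def unitary_mat_def by auto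

lemma qstate_norm:
  assumes "d > 0" "\<And>t. t \<le> T \<Longrightarrow> unitary_mat d (U t)"
  shows "t \<le> T \<Longrightarrow> (\<Sum>j<d. (cmod (qstate d U lab x t $ j))\<^sup>2) = 1"
proof (induction t)
  case 0
  have "(\<Sum>j<d. (cmod (unit_vec d 0 $ j))\<^sup>2) = (\<Sum>j<d. if j = 0 then 1 else 0)"
    by (rule sum.cong) (use assms in auto)
  also have "\<dots> = 1" using assms by simp
  finally show ?case using unitary_sq[OF assms(2)[of 0]] by simp
next
  case (Suc t)
  have car: "\<And>t. t \<le> T \<Longrightarrow> U t \<in> carrier_mat d d" using assms unfolding unitary_mat_def by auto
  have tT: "t \<le> T" using Suc(2) by simp
  have dv: "dim_vec (qstate d U lab x t) = d" by (rule qstate_dim[of T U d, OF car tT])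
  have "(\<Sum>j<d. (cmod (qstate d U lab x (Suc t) $ j))\<^sup>2)
      = (\<Sum>j<d. (cmod ((oracle_mat d lab x *\<^sub>v qstate d U lab x t) $ j))\<^sup>2)"
    using unitary_sq[OF assms(2)[OF Suc(2)]] dv by (simp add: oracle_mat_def)
  also have "\<dots> = (\<Sum>j<d. (cmod (qstate d U lab x t $ j))\<^sup>2)"
    by (rule sum.cong) (auto simp: oracle_apply dv norm_mult ov_cmod)
  finally show ?case using Suc by simp
qed

lemma ov_diff:
  assumes "\<forall>i. i \<noteq> e \<longrightarrow> (i \<in> x \<longleftrightarrow> i \<in> y)"
  shows "cmod (ov lab y j * p - ov lab x j * q) \<le> cmod (p - q) + (if lab j = Some e then 2 * cmod q else 0)"
proof (cases "lab j")
  case None thus ?thesis by (simp add: ov_def)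
next
  case (Some i)
  show ?thesis
  proof (cases "ov lab y j = ov lab x j")
    case True
    hence "cmod (ov lab y j * p - ov lab x j * q) = cmod (p - q)"
      by (simp add: right_diff_distrib[symmetric] norm_mult ov_cmod)
    thus ?thesis by simp
  next
    case False
    hence ie: "i = e" and neg: "ov lab y j = - ov lab x j"
      using assms Some by (auto simp: ov_def split: if_splits)
    have "ov lab y j * p - ov lab x j * q = ov lab y j * (p - q) + ov lab y j * (2 * q)"
      using neg by (simp add: algebra_simps)
    hence "cmod (ov lab y j * p - ov lab x j * q) \<le> cmod (p - q) + 2 * cmod q"
      by (metis norm_triangle_ineq norm_mult ov_cmod mult_1 norm_mult norm_numeral)
    thus ?thesis using ie Some by simp
  qed
qed

definition amp :: "nat \<Rightarrow> (nat \<Rightarrow> complex mat) \<Rightarrow> (nat \<Rightarrow> 'i option) \<Rightarrow> 'i set \<Rightarrow> nat \<Rightarrow> 'i \<Rightarrow> real" where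
  "amp d U lab x t e = L2_set (\<lambda>j. if lab j = Some e then cmod (qstate d U lab x t $ j) else 0) {..<d}"

definition dst :: "nat \<Rightarrow> (nat \<Rightarrow> complex mat) \<Rightarrow> (nat \<Rightarrow> 'i option) \<Rightarrow> 'i set \<Rightarrow> 'i set \<Rightarrow> nat \<Rightarrow> real" where
  "dst d U lab x y t = L2_set (\<lambda>j. cmod (qstate d U lab y t $ j - qstate d U lab x t $ j)) {..<d}"

lemma hybrid:
  assumes uni: "\<And>t. t \<le> T \<Longrightarrow> unitary_mat d (U t)"
    and xy: "\<forall>i. i \<noteq> e \<longrightarrow> (i \<in> x \<longleftrightarrow> i \<in> y)"
  shows "t \<le> T \<Longrightarrow> dst d U lab x y t \<le> 2 * (\<Sum>s<t. amp d U lab x s e)"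
proof (induction t)
  case 0 thus ?case by (simp add: dst_def L2_set_0')
next
  case (Suc t)
  have car: "\<And>t. t \<le> T \<Longrightarrow> U t \<in> carrier_mat d d" using uni unfolding unitary_mat_def by auto
  define a where "a = oracle_mat d lab y *\<^sub>v qstate d U lab y t"
  define b where "b = oracle_mat d lab x *\<^sub>v qstate d U lab x t"
  have dy: "dim_vec (qstate d U lab y t) = d" and dx: "dim_vec (qstate d U lab x t) = d"
    using qstate_dim[of T U d, OF car, of t] Suc(2) by auto
  have da: "dim_vec a = d" and db: "dim_vec b = d" unfolding a_def b_def by (simp_all add: oracle_mat_def)
  define w where "w = vec d (\<lambda>j. a $ j - b $ j)"
  have Uc: "U (Suc t) \<in> carrier_mat d d" using car Suc by auto
  have lin: "qstate d U lab y (Suc t) $ i - qstate d U lab x (Suc t) $ i = (U (Suc t) *\<^sub>v w) $ i" if "i < d" for i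
    using that mv_sum[OF Uc da] mv_sum[OF Uc db] mv_sum[OF Uc, of w]
    by (simp add: a_def[symmetric] b_def[symmetric] w_def sum_subtractf[symmetric] right_diff_distrib)
  have "dst d U lab x y (Suc t) = L2_set (\<lambda>j. cmod ((U (Suc t) *\<^sub>v w) $ j)) {..<d}"
    unfolding dst_def by (rule L2_set_cong) (auto simp del: qstate.simps simp: lin)
  also have "\<dots> = L2_set (\<lambda>j. cmod (w $ j)) {..<d}"
    unfolding L2_set_def using unitary_sq[OF uni[OF Suc(2)], of w] by (simp add: w_def)
  also have "\<dots> \<le> L2_set (\<lambda>j. cmod (qstate d U lab y t $ j - qstate d U lab x t $ j)
        + (if lab j = Some e then 2 * cmod (qstate d U lab x t $ j) else 0)) {..<d}"
    apply (rule L2_set_mono)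
    using ov_diff[OF xy] by (auto simp: w_def a_def b_def oracle_apply dx dy)
  also have "\<dots> \<le> dst d U lab x y t + L2_set (\<lambda>j. 2 * (if lab j = Some e then cmod (qstate d U lab x t $ j) else 0)) {..<d}"
    unfolding dst_def by (rule order_trans[OF L2_set_triangle_ineq]) (simp add: if_distrib cong: if_cong)
  also have "\<dots> = dst d U lab x y t + 2 * amp d U lab x t e"
    by (simp add: amp_def L2_set_right_distrib)
  also have "\<dots> \<le> 2 * (\<Sum>s<Suc t. amp d U lab x s e)"
    using Suc by simp
  finally show ?case .
qed

lemma L2_tri:
  assumes "A \<subseteq> B" "finite B"
  shows "L2_set (\<lambda>j. cmod (p j)) A \<le> L2_set (\<lambda>j. cmod (q j)) A + L2_set (\<lambda>j. cmod (p j - q j)) B"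
proof -
  have "L2_set (\<lambda>j. cmod (p j)) A \<le> L2_set (\<lambda>j. cmod (q j) + cmod (p j - q j)) A"
    by (rule L2_set_mono) (auto intro: norm_triangle_sub)
  also have "\<dots> \<le> L2_set (\<lambda>j. cmod (q j)) A + L2_set (\<lambda>j. cmod (p j - q j)) A"
    by (rule L2_set_triangle_ineq)
  also have "L2_set (\<lambda>j. cmod (p j - q j)) A \<le> L2_set (\<lambda>j. cmod (p j - q j)) B"
    unfolding L2_set_def
    by (rule real_sqrt_le_mono, rule sum_mono2) (use assms in auto)
  finally show ?thesis by simp
qed

lemma distinguish:
  assumes cb: "computes_bounded_error I f T d U lab acc"
    and x: "x \<subseteq> I" and y: "y \<subseteq> I" and fxy: "f x \<noteq> f y"
  shows "1/5 \<le> dst d U lab x y T"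
proof -
  define A where "A = acc \<inter> {..<d}"
  have AB: "A \<subseteq> {..<d}" unfolding A_def by auto
  have sq: "L2_set (\<lambda>j. cmod (qstate d U lab z T $ j)) A = sqrt (accept_prob d U lab acc T z)" for z
    unfolding L2_set_def accept_prob_def A_def ..
  have t1: "sqrt (accept_prob d U lab acc T x) \<le> sqrt (accept_prob d U lab acc T y) + dst d U lab x y T"
    using L2_tri[OF AB, of "\<lambda>j. qstate d U lab x T $ j" "\<lambda>j. qstate d U lab y T $ j"]
    unfolding sq dst_def by (simp add: norm_minus_commute)
  have t2: "sqrt (accept_prob d U lab acc T y) \<le> sqrt (accept_prob d U lab acc T x) + dst d U lab x y T"
    using L2_tri[OF AB, of "\<lambda>j. qstate d U lab y T $ j" "\<lambda>j. qstate d U lab x T $ j"]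
    unfolding sq dst_def by simp
  have hi: "4/5 \<le> sqrt (accept_prob d U lab acc T z)" if "z \<subseteq> I" "f z" for z
    by (rule real_le_rsqrt) (use cb_facts(4)[OF cb that] in \<open>simp add: power2_eq_square\<close>)
  have lo: "sqrt (accept_prob d U lab acc T z) \<le> 3/5" if "z \<subseteq> I" "\<not> f z" for z
    by (rule real_le_lsqrt) (use cb_facts(5)[OF cb that] in \<open>simp_all add: power2_eq_square\<close>)
  show ?thesis
  proof (cases "f x")
    case True
    hence "\<not> f y" using fxy by simp
    thus ?thesis using hi[OF x True] lo[OF y] t1 by linarith
  next
    case False
    hence "f y" using fxy by simp
    thus ?thesis using lo[OF x False] hi[OF y] t2 by linarith
  qed
qed

lemma amp_sum:
  assumes cb: "computes_bounded_error I f T d U lab acc" and s: "s \<le> T" and S: "finite S"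
  shows "(\<Sum>e\<in>S. (amp d U lab x s e)^2) \<le> 1"
proof -
  let ?c = "\<lambda>j. (cmod (qstate d U lab x s $ j))^2"
  have "(\<Sum>e\<in>S. (amp d U lab x s e)^2) = (\<Sum>e\<in>S. \<Sum>j<d. if lab j = Some e then ?c j else 0)"
    unfolding amp_def L2_sq by (intro sum.cong refl) simp
  also have "\<dots> = (\<Sum>j<d. \<Sum>e\<in>S. if lab j = Some e then ?c j else 0)"
    by (rule sum.swap)
  also have "\<dots> \<le> (\<Sum>j<d. ?c j)"
  proof (rule sum_mono)
    fix j
    show "(\<Sum>e\<in>S. if lab j = Some e then ?c j else 0) \<le> ?c j"
      using S by (cases "lab j") auto
  qed
  also have "\<dots> = 1" using qstate_norm[where d=d and T=T and U=U, OF cb_facts(1,2)[OF cb] s] by blast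
  finally show ?thesis .
qed

lemma count_bound:
  assumes cb: "computes_bounded_error I f T d U lab acc" and x: "x \<subseteq> I" and S: "finite S"
    and flip: "\<forall>e\<in>S. \<exists>y. y \<subseteq> I \<and> (\<forall>i. i \<noteq> e \<longrightarrow> (i \<in> x \<longleftrightarrow> i \<in> y)) \<and> f y \<noteq> f x"
  shows "real (card S) \<le> 100 * (real T)^2"
proof (cases "S = {}")
  case True thus ?thesis by simp
next
  case False
  define c where "c = real (card S)"
  define l where "l = sqrt c"
  have cpos: "c > 0" using False S unfolding c_def by (simp add: card_gt_0_iff)
  have lpos: "l > 0" unfolding l_def using cpos by simp
  have l2: "l^2 = c" unfolding l_def using cpos by simp
  have per_e: "1/5 \<le> 2 * (\<Sum>s<T. amp d U lab x s e)" if "e \<in> S" for e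
  proof -
    have ex: "\<exists>y. y \<subseteq> I \<and> (\<forall>i. i \<noteq> e \<longrightarrow> (i \<in> x \<longleftrightarrow> i \<in> y)) \<and> f y \<noteq> f x"
      by (rule bspec[OF flip that])
    then obtain y where y0: "y \<subseteq> I \<and> (\<forall>i. i \<noteq> e \<longrightarrow> (i \<in> x \<longleftrightarrow> i \<in> y)) \<and> f y \<noteq> f x"
      by (rule exE)
    have y: "y \<subseteq> I" "\<forall>i. i \<noteq> e \<longrightarrow> (i \<in> x \<longleftrightarrow> i \<in> y)" "f y \<noteq> f x"
      using y0 by (rule conjunct1, rule conjunct1[OF conjunct2], rule conjunct2[OF conjunct2])
    have fxy: "f x \<noteq> f y" using y(3) by metis
    have uni: "\<And>t. t \<le> T \<Longrightarrow> unitary_mat d (U t)" by (rule cb_facts(2)[OF cb])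
    have "1/5 \<le> dst d U lab x y T" by (rule distinguish[OF cb x y(1) fxy])
    also have "\<dots> \<le> 2 * (\<Sum>s<T. amp d U lab x s e)"
      by (rule hybrid[where T=T and U=U and d=d and t=T, OF uni y(2) order_refl])
    finally show ?thesis .
  qed
  have "c / 5 = (\<Sum>e\<in>S. 1/5)" unfolding c_def by simp
  also have "\<dots> \<le> (\<Sum>e\<in>S. 2 * (\<Sum>s<T. amp d U lab x s e))"
    by (rule sum_mono) (rule per_e)
  also have "\<dots> = 2 * (\<Sum>e\<in>S. \<Sum>s<T. amp d U lab x s e)"
    by (simp add: sum_distrib_left)
  also have "\<dots> = 2 * (\<Sum>s<T. \<Sum>e\<in>S. amp d U lab x s e)"
    by (subst sum.swap) (rule refl)
  finally have A: "c / 5 \<le> 2 * (\<Sum>s<T. \<Sum>e\<in>S. amp d U lab x s e)" .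
  have per_s: "l * (\<Sum>e\<in>S. amp d U lab x s e) \<le> c" if "s < T" for s
  proof -
    have "2 * l * a \<le> c * a^2 + 1" for a
    proof -
      have "0 \<le> (l * a - 1)^2" by simp
      thus ?thesis using l2 by (simp add: power2_eq_square algebra_simps)
    qed
    hence "(\<Sum>e\<in>S. 2 * l * amp d U lab x s e) \<le> (\<Sum>e\<in>S. c * (amp d U lab x s e)^2 + 1)"
      by (intro sum_mono) auto
    also have "\<dots> = c * (\<Sum>e\<in>S. (amp d U lab x s e)^2) + c"
      unfolding c_def by (simp add: sum.distrib sum_distrib_left)
    also have "\<dots> \<le> c * 1 + c"
      using amp_sum[OF cb _ S, of s x] that cpos by (intro add_right_mono mult_left_mono) auto
    finally have B: "(\<Sum>e\<in>S. 2 * l * amp d U lab x s e) \<le> 2 * c" by simp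
    have "(\<Sum>e\<in>S. 2 * l * amp d U lab x s e) = 2 * (l * (\<Sum>e\<in>S. amp d U lab x s e))"
      by (simp add: sum_distrib_left mult.assoc)
    thus ?thesis using B by linarith
  qed
  have "l * (c / 5) \<le> l * (2 * (\<Sum>s<T. \<Sum>e\<in>S. amp d U lab x s e))"
    using mult_left_mono[OF A, of l] lpos by linarith
  also have "\<dots> = 2 * (\<Sum>s<T. l * (\<Sum>e\<in>S. amp d U lab x s e))"
    by (simp only: mult.left_commute[of l 2] sum_distrib_left)
  also have "\<dots> \<le> 2 * (\<Sum>s<T. c)"
    using per_s by (intro mult_left_mono sum_mono) auto
  also have "\<dots> = 2 * (real T * c)" by simp
  finally have ineq: "l * (c / 5) \<le> 2 * (real T * c)" .
  have e1: "l * (c / 5) = (l * c) / 5" by simp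
  have "l * c \<le> 10 * (real T * c)" using ineq e1 by linarith
  hence "l * c \<le> (10 * real T) * c" by (simp add: mult.assoc)
  hence "l \<le> 10 * real T" using cpos by simp
  hence "l^2 \<le> (10 * real T)^2" using lpos by (intro power_mono) auto
  thus ?thesis using l2 unfolding c_def by (simp add: power_mult_distrib)
qed


definition col :: "nat set set \<Rightarrow> nat \<Rightarrow> nat \<Rightarrow> bool" where
  "col EH n m \<longleftrightarrow> (\<exists>h. (\<forall>u<n. h u < m) \<and> (\<forall>u v. {u,v} \<in> EH \<longrightarrow> h u \<noteq> h v))"

definition pairs :: "nat set \<Rightarrow> nat set set" where
  "pairs A = {{a,b} | a b. a \<in> A \<and> b \<in> A \<and> a \<noteq> b}"

lemma all_edgesD: "{u,v} \<in> all_edges n \<Longrightarrow> u < n \<and> v < n \<and> u \<noteq> v"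
  unfolding all_edges_def by (auto simp: doubleton_eq_iff)

lemma pairsD: "{u,v} \<in> pairs A \<Longrightarrow> u \<in> A \<and> v \<in> A \<and> u \<noteq> v"
  unfolding pairs_def by (auto simp: doubleton_eq_iff)

lemma pairs_card2: "pairs A = {B. B \<subseteq> A \<and> card B = 2}"
  unfolding pairs_def by (auto simp: card_2_iff)

lemma card_pairs: "finite A \<Longrightarrow> card (pairs A) = card A choose 2"
  unfolding pairs_card2 by (rule n_subsets)

lemma finite_pairs: "finite A \<Longrightarrow> finite (pairs A)"
  unfolding pairs_card2 by (rule finite_subset[of _ "Pow A"]) auto

lemma pairs_sub: "A \<subseteq> {..<n} \<Longrightarrow> pairs A \<subseteq> all_edges n"
  unfolding pairs_def all_edges_def by auto

lemma hom_to_col: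
  assumes "has_hom n EH EG" "\<forall>w<n. g w < m" "\<forall>a b. {a,b} \<in> EG \<longrightarrow> g a \<noteq> g b"
  shows "col EH n m"
proof -
  obtain h where h: "\<forall>u<n. h u < n" "\<forall>u v. {u, v} \<in> EH \<longrightarrow> {h u, h v} \<in> EG"
    using assms(1) unfolding has_hom_def by blast
  show ?thesis unfolding col_def
    by (rule exI[of _ "\<lambda>u. g (h u)"]) (use h assms(2,3) in auto)
qed

lemma clique_hom:
  assumes EH: "EH \<subseteq> all_edges n" and c: "col EH n m" and phi: "\<forall>i<m. \<phi> i < n"
    and cl: "\<forall>i j. i < m \<longrightarrow> j < m \<longrightarrow> i \<noteq> j \<longrightarrow> {\<phi> i, \<phi> j} \<in> EG"
  shows "has_hom n EH EG"
proof -
  obtain h where h: "\<forall>u<n. h u < m" "\<forall>u v. {u,v} \<in> EH \<longrightarrow> h u \<noteq> h v"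
    using c unfolding col_def by blast
  show ?thesis unfolding has_hom_def
  proof (rule exI[of _ "\<lambda>u. \<phi> (h u)"], intro conjI allI impI)
    fix u assume "u < n" thus "\<phi> (h u) < n" using h phi by auto
  next
    fix u v assume uv: "{u,v} \<in> EH"
    hence "u < n" "v < n" using EH all_edgesD by blast+
    thus "{\<phi> (h u), \<phi> (h v)} \<in> EG" using h uv cl by auto
  qed
qed

lemma choose_bound:
  fixes m n :: nat
  assumes "2 \<le> m" "n \<le> 2 * m"
  shows "n * n \<le> 16 * (m choose 2)"
proof -
  have e: "2 * (m choose 2) = m * (m - 1)"
  proof -
    have "even (m * (m - 1))"
      apply (cases "even m")
       apply (simp add: even_mult_iff)
      using assms(1) by (simp add: even_mult_iff)
    thus ?thesis unfolding choose_two by simp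
  qed
  have "n * n \<le> (2*m) * (2*m)" using assms by (intro mult_le_mono) auto
  also have "\<dots> = 4 * m * m" by simp
  also have "\<dots> \<le> 4 * m * (2 * (m - 1))" using assms by (intro mult_le_mono) auto
  also have "\<dots> = 8 * (m * (m - 1))" by simp
  also have "\<dots> = 16 * (m choose 2)" using e by simp
  finally show ?thesis .
qed

lemma comb:
  assumes n: "n \<ge> 2" and EH: "EH \<subseteq> all_edges n" and ne: "EH \<noteq> {}"
  shows "\<exists>x S. x \<subseteq> all_edges n \<and> finite S \<and> n * n \<le> 16 * card S \<and>
     (\<forall>e\<in>S. \<exists>y. y \<subseteq> all_edges n \<and> (\<forall>i. i \<noteq> e \<longrightarrow> (i \<in> x \<longleftrightarrow> i \<in> y)) \<and>
        f_hom n EH y \<noteq> f_hom n EH x)"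
proof -
  have coln: "col EH n n" unfolding col_def
    by (rule exI[of _ id]) (use EH all_edgesD in auto)
  define k where "k = (LEAST m. col EH n m)"
  have colk: "col EH n k" unfolding k_def by (rule LeastI[of _ n]) (rule coln)
  have kn: "k \<le> n" unfolding k_def by (rule Least_le) (rule coln)
  have notcol: "\<not> col EH n m" if "m < k" for m
    using not_less_Least[of m "col EH n"] that unfolding k_def by blast
  obtain e0 where e0: "e0 \<in> EH" using ne by blast
  then obtain u v where "e0 = {u,v}" using EH unfolding all_edges_def by blast
  hence uv: "{u,v} \<in> EH" using e0 by simp
  have uvn: "u < n" "v < n" "u \<noteq> v" using uv EH all_edgesD by blast+
  have k2: "k \<ge> 2"
  proof (rule ccontr)
    assume "\<not> k \<ge> 2"
    then obtain h where h: "\<forall>u<n. h u < k" "\<forall>u v. {u,v} \<in> EH \<longrightarrow> h u \<noteq> h v"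
      using colk unfolding col_def by blast
    have "h u < k" "h v < k" "h u \<noteq> h v" using h uv uvn by auto
    thus False using \<open>\<not> k \<ge> 2\<close> by linarith
  qed
  have nck: "\<not> col EH n (k - 1)" using notcol k2 by simp
  show ?thesis
  proof (cases "n \<le> 2 * k")
    case True
    define x where "x = pairs {..<k}"
    have xI: "x \<subseteq> all_edges n" unfolding x_def using kn by (intro pairs_sub) auto
    have fx: "f_hom n EH x"
      unfolding f_hom_def x_def
      by (rule clique_hom[OF EH colk, of id]) (use kn in \<open>auto simp: pairs_def\<close>)
    have flip: "\<not> f_hom n EH (x - {e})" if e: "e \<in> x" for e
    proof
      assume hom: "f_hom n EH (x - {e})"
      obtain a b where ab: "e = {a,b}" "a < k" "b < k" "a \<noteq> b" using e unfolding x_def pairs_def by auto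
      define g where "g = (\<lambda>w. if w < k then (let w' = (if w = b then a else w) in if w' > b then w' - 1 else w') else 0)"
      have "col EH n (k - 1)"
      proof (rule hom_to_col[of n EH "x - {e}" g])
        show "has_hom n EH (x - {e})" using hom unfolding f_hom_def .
        show "\<forall>w<n. g w < k - 1" using ab k2 unfolding g_def Let_def by auto
        show "\<forall>p q. {p,q} \<in> x - {e} \<longrightarrow> g p \<noteq> g q"
        proof (intro allI impI)
          fix p q assume pq: "{p,q} \<in> x - {e}"
          hence pq': "p < k" "q < k" "p \<noteq> q" "{p,q} \<noteq> {a,b}"
            using pairsD[of p q "{..<k}"] ab(1) unfolding x_def by auto
          show "g p \<noteq> g q"
            using pq' ab(2-4) unfolding g_def Let_def
            by (auto split: if_splits simp: doubleton_eq_iff)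
        qed
      qed
      thus False using nck by simp
    qed
    show ?thesis
    proof (intro exI conjI)
      show "x \<subseteq> all_edges n" by (rule xI)
      show "finite x" unfolding x_def by (rule finite_pairs) simp
      show "n * n \<le> 16 * card x" unfolding x_def card_pairs[OF finite_lessThan]
        by (rule choose_bound) (use True k2 in auto)
      show "\<forall>e\<in>x. \<exists>y. y \<subseteq> all_edges n \<and> (\<forall>i. i \<noteq> e \<longrightarrow> (i \<in> x \<longleftrightarrow> i \<in> y)) \<and>
        f_hom n EH y \<noteq> f_hom n EH x"
      proof (intro ballI)
        fix e assume e: "e \<in> x"
        show "\<exists>y. y \<subseteq> all_edges n \<and> (\<forall>i. i \<noteq> e \<longrightarrow> (i \<in> x \<longleftrightarrow> i \<in> y)) \<and>
          f_hom n EH y \<noteq> f_hom n EH x"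
          by (rule exI[of _ "x - {e}"]) (use flip[OF e] fx xI in auto)
      qed
    qed
  next
    case False
    define x where "x = {{a,b} | a b. a < n \<and> b < n \<and> a \<noteq> b \<and> (a < k - 2 \<or> b < k - 2)}"
    define S where "S = pairs {k-2..<n}"
    have xI: "x \<subseteq> all_edges n" unfolding x_def all_edges_def by auto
    have SI: "S \<subseteq> all_edges n" unfolding S_def by (intro pairs_sub) auto
    have fx: "\<not> f_hom n EH x"
    proof
      assume hom: "f_hom n EH x"
      define g where "g = (\<lambda>w::nat. if w < k - 2 then w else k - 2)"
      have "col EH n (k - 1)"
      proof (rule hom_to_col[of n EH x g])
        show "has_hom n EH x" using hom unfolding f_hom_def .
        show "\<forall>w<n. g w < k - 1" using k2 unfolding g_def by auto
        show "\<forall>p q. {p,q} \<in> x \<longrightarrow> g p \<noteq> g q"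
        proof (intro allI impI)
          fix p q assume "{p,q} \<in> x"
          then obtain a b where "{p,q} = {a,b}" "a \<noteq> b" "a < k - 2 \<or> b < k - 2"
            unfolding x_def by auto
          hence "p \<noteq> q" "p < k - 2 \<or> q < k - 2" by (auto simp: doubleton_eq_iff)
          thus "g p \<noteq> g q" unfolding g_def by auto
        qed
      qed
      thus False using nck by simp
    qed
    have flip: "f_hom n EH (insert e x)" if e: "e \<in> S" for e
    proof -
      obtain a b where ab: "e = {a,b}" "k - 2 \<le> a" "a < n" "k - 2 \<le> b" "b < n" "a \<noteq> b"
        using e unfolding S_def pairs_def by auto
      define \<phi> where "\<phi> = (\<lambda>i. if i < k - 2 then i else if i = k - 2 then a else b)"
      show ?thesis unfolding f_hom_def
      proof (rule clique_hom[OF EH colk, of \<phi>])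
        show "\<forall>i<k. \<phi> i < n" using ab kn unfolding \<phi>_def by auto
        show "\<forall>i j. i < k \<longrightarrow> j < k \<longrightarrow> i \<noteq> j \<longrightarrow> {\<phi> i, \<phi> j} \<in> insert e x"
        proof (intro allI impI)
          fix i j assume ij: "i < k" "j < k" "i \<noteq> j"
          show "{\<phi> i, \<phi> j} \<in> insert e x"
          proof (cases "i < k - 2 \<or> j < k - 2")
            case True
            have "\<phi> i < n" "\<phi> j < n" "\<phi> i \<noteq> \<phi> j" "\<phi> i < k - 2 \<or> \<phi> j < k - 2"
              using ab kn ij True unfolding \<phi>_def by auto
            thus ?thesis unfolding x_def by blast
          next
            case False
            hence "{i,j} = {k-2, k-1}" using ij k2 by auto
            hence "{\<phi> i, \<phi> j} = {a,b}" using k2 unfolding \<phi>_def by (auto simp: doubleton_eq_iff)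
            thus ?thesis using ab by simp
          qed
        qed
      qed
    qed
    show ?thesis
    proof (intro exI conjI)
      show "x \<subseteq> all_edges n" by (rule xI)
      show "finite S" unfolding S_def by (rule finite_pairs) simp
      show "n * n \<le> 16 * card S" unfolding S_def card_pairs[OF finite_atLeastLessThan]
        by (rule choose_bound) (use False k2 kn in auto)
      show "\<forall>e\<in>S. \<exists>y. y \<subseteq> all_edges n \<and> (\<forall>i. i \<noteq> e \<longrightarrow> (i \<in> x \<longleftrightarrow> i \<in> y)) \<and>
        f_hom n EH y \<noteq> f_hom n EH x"
      proof (intro ballI)
        fix e assume e: "e \<in> S"
        show "\<exists>y. y \<subseteq> all_edges n \<and> (\<forall>i. i \<noteq> e \<longrightarrow> (i \<in> x \<longleftrightarrow> i \<in> y)) \<and>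
          f_hom n EH y \<noteq> f_hom n EH x"
          by (rule exI[of _ "insert e x"]) (use flip[OF e] fx xI SI e in auto)
      qed
    qed
  qed
qed


lemma dm: fixes q c N :: nat shows "c < N \<Longrightarrow> (q * N + c) div N = q \<and> (q * N + c) mod N = c"
  by simp

lemma grid_img: fixes N M q c :: nat shows "q < M \<Longrightarrow> c < N \<Longrightarrow> q * N + c < N * M"
proof -
  assume "q < M" "c < N"
  hence "q * N + c < q * N + N" by simp
  also have "\<dots> = (q + 1) * N" by simp
  also have "\<dots> \<le> M * N" using \<open>q < M\<close> by (intro mult_le_mono) auto
  finally show ?thesis by (simp add: mult.commute)
qed

lemma grid_bij:
  fixes N M :: nat
  assumes N: "N > 0"
  shows "bij_betw (\<lambda>(q,c). q * N + c) ({..<M} \<times> {..<N}) {..<N * M}"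
  apply (rule bij_betw_byWitness[where f' = "\<lambda>k. (k div N, k mod N)"])
     apply auto[1]
    apply simp
  using grid_img apply auto[1]
  using N apply (auto simp: less_mult_imp_div_less mult.commute)
  done

lemma sum_grid:
  fixes N M :: nat
  assumes N: "N > 0"
  shows "(\<Sum>k<N * M. g k) = (\<Sum>q<M. \<Sum>c<N. g (q * N + c))"
proof -
  have "(\<Sum>q<M. \<Sum>c<N. g (q * N + c)) = (\<Sum>(q,c)\<in>{..<M} \<times> {..<N}. g (q * N + c))"
    by (rule sum.cartesian_product)
  also have "\<dots> = (\<Sum>k<N * M. g k)"
    using sum.reindex_bij_betw[OF grid_bij[OF N, of M], of g] by (simp add: case_prod_unfold)
  finally show ?thesis by simp
qed

lemma set_decode_bound: "q < 2^N \<Longrightarrow> set_decode q \<subseteq> {..<N}"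
proof
  fix i assume q: "q < 2^N" and i: "i \<in> set_decode q"
  hence "odd (q div 2^i)" by (simp add: set_decode_def)
  hence "q div 2^i \<noteq> 0" by (metis dvd_0_right)
  hence "2^i \<le> q" by (metis div_less not_less)
  hence "(2::nat)^i < 2^N" using q by linarith
  thus "i \<in> {..<N}" by simp
qed

lemma set_encode_bound: "A \<subseteq> {..<N} \<Longrightarrow> set_encode A < 2^N"
proof -
  assume A: "A \<subseteq> {..<N}"
  have "set_encode A = (\<Sum>i\<in>A. 2^i)" by (simp add: set_encode_def)
  also have "\<dots> \<le> (\<Sum>i\<in>{0..<N}. (2::nat)^i)" using A by (intro sum_mono2) auto
  also have "\<dots> = 2^N - 1" by (rule sum_power2)
  also have "\<dots> < 2^N" by simp
  finally show ?thesis .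
qed

lemma decode_bij: "bij_betw set_decode {..<2^N} (Pow {..<N})"
proof (rule bij_betw_byWitness[where f' = set_encode])
  show "\<forall>a\<in>{..<2 ^ N}. set_encode (set_decode a) = a" by simp
  show "\<forall>a'\<in>Pow {..<N}. set_decode (set_encode a') = a'"
    by (metis PowD finite_lessThan finite_subset set_encode_inverse)
  show "set_decode ` {..<2 ^ N} \<subseteq> Pow {..<N}" using set_decode_bound by auto
  show "set_encode ` Pow {..<N} \<subseteq> {..<2 ^ N}" using set_encode_bound by auto
qed

lemma char_sum_pow:
  "A \<subseteq> {..<N} \<Longrightarrow> B \<subseteq> {..<N} \<Longrightarrow>
   (\<Sum>Q\<in>Pow {..<N}. (-1::complex)^(card (A \<inter> Q)) * (-1)^(card (Q \<inter> B))) = (if A = B then 2^N else 0)"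
proof (induction N arbitrary: A B)
  case 0 thus ?case by simp
next
  case (Suc N)
  define A' where "A' = A - {N}"
  define B' where "B' = B - {N}"
  have A': "A' \<subseteq> {..<N}" using Suc(2) unfolding A'_def by auto
  have B': "B' \<subseteq> {..<N}" using Suc(3) unfolding B'_def by auto
  define s where "s = (\<lambda>(A::nat set) (Q::nat set) (B::nat set). (-1::complex)^(card (A \<inter> Q)) * (-1)^(card (Q \<inter> B)))"
  have fin: "finite Q" if "Q \<in> Pow {..<N}" for Q using that by (auto intro: finite_subset)
  have s1: "s A Q B = s A' Q B'" if "Q \<in> Pow {..<N}" for Q
  proof -
    have "A \<inter> Q = A' \<inter> Q" "Q \<inter> B = Q \<inter> B'" using that unfolding A'_def B'_def by auto
    thus ?thesis unfolding s_def by simp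
  qed
  have s2: "s A (insert N Q) B = (-1)^((if N \<in> A then 1 else 0) + (if N \<in> B then 1 else 0)) * s A' Q B'"
    if "Q \<in> Pow {..<N}" for Q
  proof -
    have NQ: "N \<notin> Q" using that by auto
    have "A \<inter> insert N Q = (if N \<in> A then insert N (A' \<inter> Q) else A' \<inter> Q)"
      "insert N Q \<inter> B = (if N \<in> B then insert N (Q \<inter> B') else Q \<inter> B')"
      using that unfolding A'_def B'_def by auto
    moreover have "finite (A' \<inter> Q)" "finite (Q \<inter> B')" using fin[OF that] by auto
    ultimately show ?thesis using NQ unfolding s_def by (auto simp: power_add)
  qed
  have disj: "Pow {..<N} \<inter> insert N ` Pow {..<N} = {}" by auto
  have inj: "inj_on (insert N) (Pow {..<N})"
    by (rule inj_onI) (metis Diff_insert_absorb PowD lessThan_iff order_less_irrefl subset_iff)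
  have "(\<Sum>Q\<in>Pow {..<Suc N}. s A Q B) = (\<Sum>Q\<in>Pow {..<N}. s A Q B) + (\<Sum>Q\<in>insert N ` Pow {..<N}. s A Q B)"
    unfolding lessThan_Suc Pow_insert by (rule sum.union_disjoint) (auto simp: disj)
  also have "(\<Sum>Q\<in>insert N ` Pow {..<N}. s A Q B) = (\<Sum>Q\<in>Pow {..<N}. s A (insert N Q) B)"
    by (rule sum.reindex[OF inj, unfolded comp_def])
  also have "\<dots> = (-1)^((if N \<in> A then 1 else 0) + (if N \<in> B then 1 else 0)) * (\<Sum>Q\<in>Pow {..<N}. s A' Q B')"
    by (simp add: s2 sum_distrib_left)
  also have "(\<Sum>Q\<in>Pow {..<N}. s A Q B) = (\<Sum>Q\<in>Pow {..<N}. s A' Q B')"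
    by (rule sum.cong) (auto simp: s1)
  also have "(\<Sum>Q\<in>Pow {..<N}. s A' Q B') = (if A' = B' then 2^N else 0)"
    using Suc.IH[OF A' B'] unfolding s_def .
  finally have "(\<Sum>Q\<in>Pow {..<Suc N}. s A Q B) = (if A' = B' then 2^N else 0) * (1 + (-1)^((if N \<in> A then 1 else 0) + (if N \<in> B then 1 else 0)))"
    by (simp add: algebra_simps)
  also have "\<dots> = (if A = B then 2^Suc N else 0)"
  proof (cases "N \<in> A \<longleftrightarrow> N \<in> B")
    case True
    hence "A = B \<longleftrightarrow> A' = B'" unfolding A'_def B'_def by blast
    thus ?thesis using True by auto
  next
    case False
    hence "A \<noteq> B" by blast
    thus ?thesis using False by auto
  qed
  finally show ?case unfolding s_def .
qed

lemma char_sum: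
  "A \<subseteq> {..<N} \<Longrightarrow> B \<subseteq> {..<N} \<Longrightarrow>
   (\<Sum>q<2^N. (-1::complex)^(card (A \<inter> set_decode q)) * (-1)^(card (set_decode q \<inter> B))) = (if A = B then 2^N else 0)"
  using sum.reindex_bij_betw[OF decode_bij[of N], of "\<lambda>Q. (-1::complex)^(card (A \<inter> Q)) * (-1)^(card (Q \<inter> B))"]
    char_sum_pow[of A N B] by simp

definition pmat :: "nat \<Rightarrow> (nat \<Rightarrow> nat) \<Rightarrow> complex mat" where
  "pmat d \<sigma> = mat d d (\<lambda>(j,k). if j = \<sigma> k then 1 else 0)"

lemma pmat_unitary:
  assumes bij: "bij_betw \<sigma> {..<d} {..<d}"
  shows "unitary_mat d (pmat d \<sigma>)"
proof -
  have cad: "cadj (pmat d \<sigma>) = mat d d (\<lambda>(j,k). if k = \<sigma> j then 1 else 0)"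
    unfolding cadj_def pmat_def by (rule eq_matI) auto
  have img: "\<sigma> k < d" if "k < d" for k using bij that unfolding bij_betw_def by auto
  have inj: "\<sigma> j = \<sigma> l \<Longrightarrow> j < d \<Longrightarrow> l < d \<Longrightarrow> j = l" for j l
    using bij unfolding bij_betw_def inj_on_def by auto
  have r: "(\<Sum>k<d. g (\<sigma> k)) = (\<Sum>k<d. g k)" for g :: "nat \<Rightarrow> complex"
    by (rule sum.reindex_bij_betw[OF bij])
  have "pmat d \<sigma> * cadj (pmat d \<sigma>) = 1\<^sub>m d"
  proof (rule eq_matI)
    fix j l assume jl: "j < dim_row (1\<^sub>m d)" "l < dim_col (1\<^sub>m d)"
    have "(pmat d \<sigma> * cadj (pmat d \<sigma>)) $$ (j,l) = (\<Sum>k<d. (if j = \<sigma> k then 1 else 0) * (if l = \<sigma> k then 1 else 0))"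
      using jl unfolding cad unfolding pmat_def by (simp add: scalar_prod_def atLeast0LessThan)
    also have "\<dots> = (\<Sum>k<d. (if j = k then 1 else 0) * (if l = k then 1 else 0))"
      by (rule r[of "\<lambda>k. (if j = k then 1 else 0) * (if l = k then 1 else 0)"])
    also have "\<dots> = 1\<^sub>m d $$ (j,l)" using jl
      by (subst sum.cong[OF refl, of _ _ "\<lambda>k. if k = j then (if l = j then 1 else 0) else 0"]) auto
    finally show "(pmat d \<sigma> * cadj (pmat d \<sigma>)) $$ (j,l) = 1\<^sub>m d $$ (j,l)" .
  qed (auto simp: pmat_def cadj_def)
  moreover have "cadj (pmat d \<sigma>) * pmat d \<sigma> = 1\<^sub>m d"
  proof (rule eq_matI)
    fix j l assume jl: "j < dim_row (1\<^sub>m d)" "l < dim_col (1\<^sub>m d)"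
    have "(cadj (pmat d \<sigma>) * pmat d \<sigma>) $$ (j,l) = (\<Sum>k<d. (if k = \<sigma> j then 1 else 0) * (if k = \<sigma> l then 1 else 0))"
      using jl unfolding cad unfolding pmat_def by (simp add: scalar_prod_def atLeast0LessThan)
    also have "\<dots> = (if \<sigma> j = \<sigma> l then 1 else 0)"
      using jl img
      by (subst sum.cong[OF refl, of _ _ "\<lambda>k. if k = \<sigma> j then (if \<sigma> l = \<sigma> j then 1 else 0) else 0"]) auto
    also have "\<dots> = 1\<^sub>m d $$ (j,l)" using jl inj by auto
    finally show "(cadj (pmat d \<sigma>) * pmat d \<sigma>) $$ (j,l) = 1\<^sub>m d $$ (j,l)" .
  qed (auto simp: pmat_def cadj_def)
  ultimately show ?thesis unfolding unitary_mat_def by (simp add: pmat_def)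
qed


definition rr :: "nat \<Rightarrow> complex" where "rr N = complex_of_real (1 / sqrt (2^N))"
definition Qs :: "nat \<Rightarrow> nat \<Rightarrow> nat set" where "Qs N j = set_decode (j div N)"
definition Wm :: "nat \<Rightarrow> complex mat" where
  "Wm N = mat (N * 2^N) (N * 2^N) (\<lambda>(j,k). if j mod N = k mod N then rr N * (-1)^(card (Qs N j \<inter> Qs N k)) else 0)"

lemma rr2: "rr N * rr N * 2^N = 1"
proof -
  have "(1 / sqrt (2^N)) * (1 / sqrt (2^N)) * (2::real)^N = 1"
    by (simp add: real_sqrt_mult[symmetric])
  hence "complex_of_real ((1 / sqrt (2^N)) * (1 / sqrt (2^N)) * (2::real)^N) = 1" by simp
  thus ?thesis unfolding rr_def by (simp only: of_real_mult of_real_power of_real_numeral)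
qed

lemma Qs_bound: "j < N * 2^N \<Longrightarrow> Qs N j \<subseteq> {..<N}"
  unfolding Qs_def by (rule set_decode_bound) (simp add: less_mult_imp_div_less mult.commute)

lemma grid_parts:
  fixes N :: nat assumes "c < N"
  shows "(q * N + c) mod N = c" "Qs N (q * N + c) = set_decode q"
  using assms by (simp_all add: Qs_def)

lemma Wapp:
  assumes N: "N > 0" and j: "j < N * 2^N" and c0: "c0 < N"
  shows "(\<Sum>k<N * 2^N. Wm N $$ (j,k) * (if k mod N = c0 then h (k div N) else 0))
    = (if j mod N = c0 then rr N * (\<Sum>(q::nat)<2^N. (-1)^(card (Qs N j \<inter> set_decode q)) * h q) else 0)"
proof -
  have "(\<Sum>k<N * 2^N. Wm N $$ (j,k) * (if k mod N = c0 then h (k div N) else 0))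
     = (\<Sum>(q::nat)<2^N. \<Sum>c<N. Wm N $$ (j, q * N + c) * (if (q * N + c) mod N = c0 then h ((q * N + c) div N) else 0))"
    by (rule sum_grid[OF N])
  also have "\<dots> = (\<Sum>(q::nat)<2^N. \<Sum>c<N. if c = c0 then (if j mod N = c0 then rr N * (-1)^(card (Qs N j \<inter> set_decode q)) * h q else 0) else 0)"
  proof (intro sum.cong refl)
    fix q c :: nat assume q: "q \<in> {..<2^N}" and c: "c \<in> {..<N}"
    have lt: "q * N + c < N * 2^N" using q c grid_img by auto
    show "Wm N $$ (j, q * N + c) * (if (q * N + c) mod N = c0 then h ((q * N + c) div N) else 0)
       = (if c = c0 then (if j mod N = c0 then rr N * (-1)^(card (Qs N j \<inter> set_decode q)) * h q else 0) else 0)"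
      using lt j c grid_parts[of c N q] unfolding Wm_def by auto
  qed
  also have "\<dots> = (\<Sum>(q::nat)<2^N. if j mod N = c0 then rr N * (-1)^(card (Qs N j \<inter> set_decode q)) * h q else 0)"
    using c0 by simp
  also have "\<dots> = (if j mod N = c0 then rr N * (\<Sum>(q::nat)<2^N. (-1)^(card (Qs N j \<inter> set_decode q)) * h q) else 0)"
    by (simp add: sum_distrib_left mult.assoc)
  finally show ?thesis .
qed

lemma Wm_carrier: "Wm N \<in> carrier_mat (N * 2^N) (N * 2^N)"
  unfolding Wm_def by simp

lemma Wm_cadj: "cadj (Wm N) = Wm N"
  unfolding cadj_def Wm_def
  by (rule eq_matI) (auto simp: rr_def Int_commute)

lemma Wm_unitary:
  assumes N: "N > 0"
  shows "unitary_mat (N * 2^N) (Wm N)"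
proof -
  have "Wm N * Wm N = 1\<^sub>m (N * 2^N)"
  proof (rule eq_matI)
    fix j l assume jl: "j < dim_row (1\<^sub>m (N * 2^N))" "l < dim_col (1\<^sub>m (N * 2^N))"
    hence j: "j < N * 2^N" and l: "l < N * 2^N" by auto
    have lN: "l mod N < N" using N by simp
    have "(Wm N * Wm N) $$ (j,l) = (\<Sum>k<N * 2^N. Wm N $$ (j,k) * Wm N $$ (k,l))"
      using j l unfolding Wm_def by (simp add: scalar_prod_def atLeast0LessThan)
    also have "\<dots> = (\<Sum>k<N * 2^N. Wm N $$ (j,k) * (if k mod N = l mod N then rr N * (-1)^(card (set_decode (k div N) \<inter> Qs N l)) else 0))"
      by (intro sum.cong refl) (use l in \<open>auto simp: Wm_def Qs_def\<close>)
    also have "\<dots> = (if j mod N = l mod N then rr N * (\<Sum>(q::nat)<2^N. (-1)^(card (Qs N j \<inter> set_decode q)) * (rr N * (-1)^(card (set_decode q \<inter> Qs N l)))) else 0)"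
      by (rule Wapp[OF N j lN])
    also have "\<dots> = (if j mod N = l mod N then rr N * rr N * (\<Sum>(q::nat)<2^N. (-1)^(card (Qs N j \<inter> set_decode q)) * (-1)^(card (set_decode q \<inter> Qs N l))) else 0)"
      by (simp add: sum_distrib_left algebra_simps)
    also have "\<dots> = (if j mod N = l mod N then rr N * rr N * (if Qs N j = Qs N l then 2^N else 0) else 0)"
      using char_sum[OF Qs_bound[OF j] Qs_bound[OF l]] by simp
    also have "\<dots> = (if j mod N = l mod N \<and> Qs N j = Qs N l then 1 else 0)"
      using rr2[of N] by simp
    also have "\<dots> = 1\<^sub>m (N * 2^N) $$ (j,l)"
    proof -
      have "j mod N = l mod N \<and> Qs N j = Qs N l \<longleftrightarrow> j = l"
      proof
        assume a: "j mod N = l mod N \<and> Qs N j = Qs N l"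
        hence "set_encode (Qs N j) = set_encode (Qs N l)" by simp
        hence "j div N = l div N" unfolding Qs_def by simp
        thus "j = l" using a by (metis div_mult_mod_eq)
      qed simp
      thus ?thesis using j l by simp
    qed
    finally show "(Wm N * Wm N) $$ (j,l) = 1\<^sub>m (N * 2^N) $$ (j,l)" .
  qed (auto simp: Wm_def)
  thus ?thesis unfolding unitary_mat_def using Wm_carrier Wm_cadj by simp
qed


definition shf :: "nat \<Rightarrow> nat \<Rightarrow> nat" where "shf N k = (k div N) * N + (k mod N + 1) mod N"
definition shi :: "nat \<Rightarrow> nat \<Rightarrow> nat" where "shi N k = (k div N) * N + (k mod N + N - 1) mod N"

lemma modA: fixes c N :: nat assumes "c < N" shows "((c + 1) mod N + N - 1) mod N = c"
proof (cases "c + 1 < N")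
  case True
  have a1: "(c + 1) mod N = c + 1" using True by (rule mod_less)
  have a2: "c + 1 + N - 1 = c + N" by arith
  have a3: "(c + N) mod N = c" using assms by (simp only: mod_add_self2 mod_less)
  show ?thesis by (simp only: a1 a2 a3)
next
  case False
  hence e: "c + 1 = N" using assms by arith
  have a1: "(c + 1) mod N = 0" by (simp only: e mod_self)
  have a2: "0 + N - 1 = c" using e by arith
  show ?thesis by (simp only: a1 a2 mod_less assms)
qed

lemma modB: fixes c N :: nat assumes "c < N" shows "((c + N - 1) mod N + 1) mod N = c"
proof (cases "c = 0")
  case True
  have a0: "c + N - 1 = N - 1" using True by arith
  have a1: "(c + N - 1) mod N = N - 1" unfolding a0 using assms by (intro mod_less) arith
  have a2: "N - 1 + 1 = N" using assms by arith
  show ?thesis unfolding a1 a2 mod_self using True by simp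
next
  case False
  have a0: "c + N - 1 = (c - 1) + N" using False by arith
  have a1: "(c + N - 1) mod N = c - 1" unfolding a0 using assms by (simp only: mod_add_self2 mod_less)
  have a2: "c - 1 + 1 = c" using False by arith
  show ?thesis by (simp only: a1 a2 mod_less assms)
qed

lemma sh_facts:
  fixes N k :: nat assumes N: "N > 0" and k: "k < N * 2^N"
  shows "shf N k < N * 2^N" "shi N k < N * 2^N" "shi N (shf N k) = k" "shf N (shi N k) = k"
    "shi N k div N = k div N" "shi N k mod N = (k mod N + N - 1) mod N"
    "shf N k div N = k div N" "shf N k mod N = (k mod N + 1) mod N"
proof -
  have q: "k div N < 2^N" using k by (simp add: less_mult_imp_div_less mult.commute)
  have c1: "(k mod N + 1) mod N < N" and c2: "(k mod N + N - 1) mod N < N" using N by auto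
  show d1: "shf N k div N = k div N" "shf N k mod N = (k mod N + 1) mod N"
    unfolding shf_def using dm[OF c1] by auto
  show d2: "shi N k div N = k div N" "shi N k mod N = (k mod N + N - 1) mod N"
    unfolding shi_def using dm[OF c2] by auto
  show "shf N k < N * 2^N" unfolding shf_def by (rule grid_img[OF q c1])
  show "shi N k < N * 2^N" unfolding shi_def by (rule grid_img[OF q c2])
  have cN: "k mod N < N" using N by simp
  show "shi N (shf N k) = k" unfolding shi_def d1 modA[OF cN] by (rule div_mult_mod_eq)
  show "shf N (shi N k) = k" unfolding shf_def d2 modB[OF cN] by (rule div_mult_mod_eq)
qed

definition Sh :: "nat \<Rightarrow> complex mat" where "Sh N = pmat (N * 2^N) (shf N)"

lemma Sh_unitary: "N > 0 \<Longrightarrow> unitary_mat (N * 2^N) (Sh N)"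
  unfolding Sh_def
  by (rule pmat_unitary, rule bij_betw_byWitness[where f' = "shi N"]) (auto simp: sh_facts)

lemma Sh_apply:
  assumes N: "N > 0" and v: "dim_vec v = N * 2^N" and j: "j < N * 2^N"
  shows "(Sh N *\<^sub>v v) $ j = v $ (shi N j)"
proof -
  have "(Sh N *\<^sub>v v) $ j = (\<Sum>k<N * 2^N. (if j = shf N k then 1 else 0) * v $ k)"
    using mv_sum[of "Sh N" "N * 2^N" v j] v j unfolding Sh_def pmat_def by simp
  also have "\<dots> = (\<Sum>k<N * 2^N. if k = shi N j then v $ k else 0)"
    by (intro sum.cong refl) (use N j in \<open>auto simp: sh_facts\<close>)
  also have "\<dots> = v $ (shi N j)" using sh_facts(2)[OF N j] by simp
  finally show ?thesis .
qed

definition labA :: "nat \<Rightarrow> (nat \<Rightarrow> 'i) \<Rightarrow> nat \<Rightarrow> 'i option" where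
  "labA N ev j = (if j mod N \<in> Qs N j then Some (ev (j mod N)) else None)"
definition UA :: "nat \<Rightarrow> nat \<Rightarrow> complex mat" where
  "UA N t = (if t = 0 \<or> t = N then Wm N else Sh N)"
definition accA :: "nat \<Rightarrow> (nat \<Rightarrow> 'i) \<Rightarrow> ('i set \<Rightarrow> bool) \<Rightarrow> nat set" where
  "accA N ev f = {j. j mod N = N - 1 \<and> f (ev ` Qs N j)}"

lemma UA_unitary: "N > 0 \<Longrightarrow> unitary_mat (N * 2^N) (UA N t)"
  unfolding UA_def using Wm_unitary Sh_unitary by auto

lemma UA_carrier: "N > 0 \<Longrightarrow> UA N t \<in> carrier_mat (N * 2^N) (N * 2^N)"
  using UA_unitary unfolding unitary_mat_def by auto

lemma oracle_step:
  assumes N: "N > 0" and t: "t < N" and dv: "dim_vec \<psi> = N * 2^N"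
    and st: "\<forall>j<N * 2^N. \<psi> $ j = (if j mod N = t then rr N * (-1)^card (Qs N j \<inter> X \<inter> {..<t}) else 0)"
    and X: "X = {i. i < N \<and> ev i \<in> x}"
  shows "\<forall>j<N * 2^N. (oracle_mat (N * 2^N) (labA N ev) x *\<^sub>v \<psi>) $ j
      = (if j mod N = t then rr N * (-1)^card (Qs N j \<inter> X \<inter> {..<Suc t}) else 0)"
proof (intro allI impI)
  fix j assume j: "j < N * 2^N"
  have fin: "finite (Qs N j \<inter> X \<inter> {..<t})" unfolding Qs_def by simp
  have eqs: "Qs N j \<inter> X \<inter> {..<Suc t} = (if t \<in> Qs N j \<and> t \<in> X then insert t (Qs N j \<inter> X \<inter> {..<t}) else Qs N j \<inter> X \<inter> {..<t})"
    by (auto simp: less_Suc_eq)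
  have tX: "t \<in> X \<longleftrightarrow> ev t \<in> x" using t X by simp
  show "(oracle_mat (N * 2^N) (labA N ev) x *\<^sub>v \<psi>) $ j
      = (if j mod N = t then rr N * (-1)^card (Qs N j \<inter> X \<inter> {..<Suc t}) else 0)"
  proof -
    have oa: "(oracle_mat (N * 2^N) (labA N ev) x *\<^sub>v \<psi>) $ j = ov (labA N ev) x j * \<psi> $ j"
      by (rule oracle_apply[OF dv j])
    show ?thesis
    proof (cases "j mod N = t")
      case False thus ?thesis using oa st j by simp
    next
      case True
      have ovv: "ov (labA N ev) x j = (if t \<in> Qs N j \<and> t \<in> X then -1 else 1)"
        using True tX by (simp add: ov_def labA_def)
      have tn: "t \<notin> Qs N j \<inter> X \<inter> {..<t}" by simp
      have e3: "(-1::complex)^card (Qs N j \<inter> X \<inter> {..<Suc t}) = (if t \<in> Qs N j \<and> t \<in> X then -1 else 1) * (-1)^card (Qs N j \<inter> X \<inter> {..<t})"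
      proof (cases "t \<in> Qs N j \<and> t \<in> X")
        case True
        hence "card (Qs N j \<inter> X \<inter> {..<Suc t}) = Suc (card (Qs N j \<inter> X \<inter> {..<t}))"
          unfolding eqs using fin tn by simp
        thus ?thesis using True by simp
      next
        case False
        hence "Qs N j \<inter> X \<inter> {..<Suc t} = Qs N j \<inter> X \<inter> {..<t}" using eqs by auto
        thus ?thesis using False by simp
      qed
      have psi: "\<psi> $ j = rr N * (-1)^card (Qs N j \<inter> X \<inter> {..<t})" using st j True by simp
      have "(oracle_mat (N * 2^N) (labA N ev) x *\<^sub>v \<psi>) $ j
          = (if t \<in> Qs N j \<and> t \<in> X then -1 else 1) * (rr N * (-1)^card (Qs N j \<inter> X \<inter> {..<t}))"
        using oa ovv psi by simp
      also have "\<dots> = rr N * ((if t \<in> Qs N j \<and> t \<in> X then -1 else 1) * (-1)^card (Qs N j \<inter> X \<inter> {..<t}))"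
        by (simp only: mult.left_commute)
      also have "\<dots> = rr N * (-1)^card (Qs N j \<inter> X \<inter> {..<Suc t})" using e3 by simp
      finally show ?thesis using True by simp
    qed
  qed
qed

lemma state_evol:
  assumes N: "N > 0" and X: "X = {i. i < N \<and> ev i \<in> x}"
  shows "t < N \<Longrightarrow> dim_vec (qstate (N * 2^N) (UA N) (labA N ev) x t) = N * 2^N \<and>
     (\<forall>j<N * 2^N. qstate (N * 2^N) (UA N) (labA N ev) x t $ j
        = (if j mod N = t then rr N * (-1)^card (Qs N j \<inter> X \<inter> {..<t}) else 0))"
proof (induction t)
  case 0
  have d0: "0 < N * 2^N" using N by simp
  have "qstate (N * 2^N) (UA N) (labA N ev) x 0 $ j = (if j mod N = 0 then rr N * (-1)^card (Qs N j \<inter> X \<inter> {..<0}) else 0)"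
    if j: "j < N * 2^N" for j
  proof -
    have "qstate (N * 2^N) (UA N) (labA N ev) x 0 $ j = (\<Sum>k<N * 2^N. Wm N $$ (j,k) * unit_vec (N * 2^N) 0 $ k)"
      using mv_sum[OF Wm_carrier[of N], of "unit_vec (N * 2^N) 0" j] j by (simp add: UA_def)
    also have "\<dots> = (\<Sum>k<N * 2^N. if k = 0 then Wm N $$ (j,0) else 0)"
      by (intro sum.cong refl) (use d0 in auto)
    also have "\<dots> = Wm N $$ (j,0)" using d0 by simp
    also have "\<dots> = (if j mod N = 0 then rr N * (-1)^card (Qs N j \<inter> X \<inter> {..<0}) else 0)"
      using j d0 unfolding Wm_def by (simp add: Qs_def)
    finally show ?thesis .
  qed
  thus ?case by (simp add: UA_def Wm_def)
next
  case (Suc t)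
  hence t: "t < N" by simp
  note IH = Suc.IH[OF t]
  define \<psi> where "\<psi> = oracle_mat (N * 2^N) (labA N ev) x *\<^sub>v qstate (N * 2^N) (UA N) (labA N ev) x t"
  have dpsi: "dim_vec \<psi> = N * 2^N" unfolding \<psi>_def by (simp add: oracle_mat_def)
  have os: "\<forall>j<N * 2^N. \<psi> $ j = (if j mod N = t then rr N * (-1)^card (Qs N j \<inter> X \<inter> {..<Suc t}) else 0)"
    unfolding \<psi>_def by (rule oracle_step[OF N t IH[THEN conjunct1] IH[THEN conjunct2] X])
  have U: "UA N (Suc t) = Sh N" using Suc.prems unfolding UA_def by simp
  have qs: "qstate (N * 2^N) (UA N) (labA N ev) x (Suc t) = Sh N *\<^sub>v \<psi>"
    unfolding \<psi>_def using U by simp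
  show ?case
  proof
    show "dim_vec (qstate (N * 2^N) (UA N) (labA N ev) x (Suc t)) = N * 2^N"
      unfolding qs by (simp add: Sh_def pmat_def)
    show "\<forall>j<N * 2^N. qstate (N * 2^N) (UA N) (labA N ev) x (Suc t) $ j
        = (if j mod N = Suc t then rr N * (-1)^card (Qs N j \<inter> X \<inter> {..<Suc t}) else 0)"
    proof (intro allI impI)
      fix j assume j: "j < N * 2^N"
      have k: "shi N j < N * 2^N" by (rule sh_facts(2)[OF N j])
      have Qe: "Qs N (shi N j) = Qs N j" unfolding Qs_def using sh_facts(5)[OF N j] by simp
      have me: "shi N j mod N = t \<longleftrightarrow> j mod N = Suc t"
      proof
        assume a: "shi N j mod N = t"
        have "j mod N = (shi N j mod N + 1) mod N"
          using sh_facts(8)[OF N k] sh_facts(4)[OF N j] by simp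
        thus "j mod N = Suc t" using a Suc.prems by simp
      next
        assume a: "j mod N = Suc t"
        thus "shi N j mod N = t" using sh_facts(6)[OF N j] Suc.prems by simp
      qed
      show "qstate (N * 2^N) (UA N) (labA N ev) x (Suc t) $ j
        = (if j mod N = Suc t then rr N * (-1)^card (Qs N j \<inter> X \<inter> {..<Suc t}) else 0)"
        unfolding qs Sh_apply[OF N dpsi j] using os k Qe me by simp
    qed
  qed
qed


lemma final_state:
  assumes N: "N > 0" and X: "X = {i. i < N \<and> ev i \<in> x}" and j: "j < N * 2^N"
  shows "qstate (N * 2^N) (UA N) (labA N ev) x N $ j = (if j mod N = N - 1 \<and> Qs N j = X then 1 else 0)"
proof -
  define t where "t = N - 1"
  have Nt: "N = Suc t" and t: "t < N" using N unfolding t_def by auto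
  have XN: "X \<subseteq> {..<N}" using X by auto
  note se = state_evol[OF N X t]
  define v where "v = oracle_mat (N * 2^N) (labA N ev) x *\<^sub>v qstate (N * 2^N) (UA N) (labA N ev) x t"
  have dv: "dim_vec v = N * 2^N" unfolding v_def by (simp add: oracle_mat_def)
  have os: "\<forall>k<N * 2^N. v $ k = (if k mod N = t then rr N * (-1)^card (Qs N k \<inter> X \<inter> {..<Suc t}) else 0)"
    unfolding v_def by (rule oracle_step[OF N t se[THEN conjunct1] se[THEN conjunct2] X])
  have q: "qstate (N * 2^N) (UA N) (labA N ev) x N = Wm N *\<^sub>v v"
  proof -
    have "UA N (Suc t) = Wm N" using Nt unfolding UA_def by simp
    hence "qstate (N * 2^N) (UA N) (labA N ev) x (Suc t) = Wm N *\<^sub>v v" unfolding v_def by simp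
    thus ?thesis using Nt by simp
  qed
  define h where "h = (\<lambda>q. rr N * (-1::complex)^card (set_decode q \<inter> X))"
  have "(Wm N *\<^sub>v v) $ j = (\<Sum>k<N * 2^N. Wm N $$ (j,k) * v $ k)"
    by (rule mv_sum[OF Wm_carrier dv j])
  also have "\<dots> = (\<Sum>k<N * 2^N. Wm N $$ (j,k) * (if k mod N = t then h (k div N) else 0))"
  proof (intro sum.cong refl)
    fix k assume k: "k \<in> {..<N * 2^N}"
    have "Qs N k \<inter> X \<inter> {..<Suc t} = set_decode (k div N) \<inter> X" using XN Nt unfolding Qs_def by auto
    thus "Wm N $$ (j,k) * v $ k = Wm N $$ (j,k) * (if k mod N = t then h (k div N) else 0)"
      using os k unfolding h_def by simp
  qed
  also have "\<dots> = (if j mod N = t then rr N * (\<Sum>(q::nat)<2^N. (-1)^(card (Qs N j \<inter> set_decode q)) * h q) else 0)"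
    by (rule Wapp[OF N j t])
  also have "\<dots> = (if j mod N = t then rr N * rr N * (\<Sum>(q::nat)<2^N. (-1)^(card (Qs N j \<inter> set_decode q)) * (-1)^card (set_decode q \<inter> X)) else 0)"
    unfolding h_def by (simp add: sum_distrib_left algebra_simps)
  also have "\<dots> = (if j mod N = t then rr N * rr N * (if Qs N j = X then 2^N else 0) else 0)"
    using char_sum[OF Qs_bound[OF j] XN] by simp
  also have "\<dots> = (if j mod N = N - 1 \<and> Qs N j = X then 1 else 0)"
    using rr2[of N] unfolding t_def by simp
  finally show ?thesis using q by simp
qed

lemma accept_alg:
  assumes N: "N > 0" and bij: "bij_betw ev {0..<N} I" and x: "x \<subseteq> I"
  shows "accept_prob (N * 2^N) (UA N) (labA N ev) (accA N ev f) N x = (if f x then 1 else 0)"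
proof -
  define X where "X = {i. i < N \<and> ev i \<in> x}"
  have XN: "X \<subseteq> {..<N}" unfolding X_def by auto
  have finX: "finite X" using XN finite_subset by blast
  have evX: "ev ` X = x"
  proof
    show "ev ` X \<subseteq> x" unfolding X_def by auto
    show "x \<subseteq> ev ` X"
    proof
      fix y assume "y \<in> x"
      hence "y \<in> ev ` {0..<N}" using x bij unfolding bij_betw_def by auto
      thus "y \<in> ev ` X" using \<open>y \<in> x\<close> unfolding X_def by auto
    qed
  qed
  define j0 where "j0 = set_encode X * N + (N - 1)"
  have j0: "j0 < N * 2^N" unfolding j0_def using set_encode_bound[OF XN] N by (intro grid_img) auto
  have j0m: "j0 mod N = N - 1" "Qs N j0 = X" unfolding j0_def Qs_def using dm[of "N - 1" N "set_encode X"] N finX by auto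
  let ?s = "\<lambda>j. qstate (N * 2^N) (UA N) (labA N ev) x N $ j"
  have "accept_prob (N * 2^N) (UA N) (labA N ev) (accA N ev f) N x
      = (\<Sum>j\<in>{..<N * 2^N} \<inter> accA N ev f. (cmod (?s j))\<^sup>2)"
    unfolding accept_prob_def by (simp add: Int_commute)
  also have "\<dots> = (\<Sum>j<N * 2^N. if j \<in> accA N ev f then (cmod (?s j))\<^sup>2 else 0)"
    by (rule sum.inter_restrict) simp
  also have "\<dots> = (\<Sum>j<N * 2^N. if j = j0 then (if f x then 1 else 0) else 0)"
  proof (intro sum.cong refl)
    fix j assume j: "j \<in> {..<N * 2^N}"
    have fs: "?s j = (if j mod N = N - 1 \<and> Qs N j = X then 1 else 0)"
      using final_state[OF N X_def] j by simp
    show "(if j \<in> accA N ev f then (cmod (?s j))\<^sup>2 else 0) = (if j = j0 then (if f x then 1 else 0) else 0)"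
    proof (cases "j = j0")
      case True
      thus ?thesis using fs j0m evX unfolding accA_def by simp
    next
      case False
      have "\<not> (j mod N = N - 1 \<and> Qs N j = X)"
      proof
        assume a: "j mod N = N - 1 \<and> Qs N j = X"
        hence "j div N = set_encode X" unfolding Qs_def by (metis set_decode_inverse)
        hence "j = j0" unfolding j0_def using a by (metis div_mult_mod_eq)
        thus False using False by simp
      qed
      thus ?thesis using fs False by auto
    qed
  qed
  also have "\<dots> = (if f x then 1 else 0)" using j0 by simp
  finally show ?thesis .
qed

lemma alg_exists:
  assumes fin: "finite I" and ne: "card I > 0"
  shows "\<exists>T d U lab acc. computes_bounded_error I f T d U lab acc"
proof -
  define N where "N = card I"
  have N: "N > 0" using ne unfolding N_def .
  obtain ev where bij: "bij_betw ev {0..<N} I" using ex_bij_betw_nat_finite[OF fin] unfolding N_def by blast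
  have "computes_bounded_error I f N (N * 2^N) (UA N) (labA N ev) (accA N ev f)"
    unfolding computes_bounded_error_def
  proof (intro conjI allI impI)
    show "0 < N * 2^N" using N by simp
    show "unitary_mat (N * 2 ^ N) (UA N t)" for t using UA_unitary[OF N] .
    fix j i assume "j < N * 2^N" "labA N ev j = Some i"
    hence "i = ev (j mod N)" unfolding labA_def by (auto split: if_splits)
    moreover have "j mod N \<in> {0..<N}" using N by simp
    ultimately show "i \<in> I" using bij unfolding bij_betw_def by auto
  next
    fix x assume x: "x \<subseteq> I"
    note a = accept_alg[OF N bij x, of f]
    { assume "f x" thus "2/3 \<le> accept_prob (N * 2^N) (UA N) (labA N ev) (accA N ev f) N x" using a by simp }
    { assume "\<not> f x" thus "2/3 \<le> 1 - accept_prob (N * 2^N) (UA N) (labA N ev) (accA N ev f) N x" using a by simp }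
  qed
  thus ?thesis by blast
qed

theorem theorem5:
  shows "\<exists>c::real. c > 0 \<and>
    (\<forall>n::nat. \<forall>EH. n \<ge> 2 \<longrightarrow> EH \<subseteq> all_edges n \<longrightarrow> EH \<noteq> {} \<longrightarrow>
       real (Q (all_edges n) (f_hom n EH)) \<ge> c * real n)"
proof (intro exI[of _ "1/40"] conjI allI impI)
  show "(0::real) < 1/40" by simp
  fix n :: nat and EH
  assume n: "n \<ge> 2" and EH: "EH \<subseteq> all_edges n" and ne: "EH \<noteq> {}"
  let ?I = "all_edges n" and ?f = "f_hom n EH"
  have finI: "finite ?I"
    by (rule finite_subset[of _ "Pow {..<n}"]) (auto simp: all_edges_def)
  have "{0,1} \<in> ?I" using n unfolding all_edges_def by force
  hence cI: "card ?I > 0" using finI card_gt_0_iff by blast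
  have ex: "\<exists>T d U lab acc. computes_bounded_error ?I ?f T d U lab acc"
    by (rule alg_exists[OF finI cI])
  have "\<exists>d U lab acc. computes_bounded_error ?I ?f (Q ?I ?f) d U lab acc"
    unfolding Q_def by (rule LeastI_ex) (use ex in blast)
  then obtain d U lab acc where cb: "computes_bounded_error ?I ?f (Q ?I ?f) d U lab acc" by blast
  obtain x S where xS: "x \<subseteq> ?I" "finite S" "n * n \<le> 16 * card S"
    "\<forall>e\<in>S. \<exists>y. y \<subseteq> ?I \<and> (\<forall>i. i \<noteq> e \<longrightarrow> (i \<in> x \<longleftrightarrow> i \<in> y)) \<and> ?f y \<noteq> ?f x"
    using comb[OF n EH ne] by blast
  have cS: "real (card S) \<le> 100 * (real (Q ?I ?f))^2"
    by (rule count_bound[OF cb xS(1) xS(2) xS(4)])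
  have "real n * real n \<le> 16 * real (card S)" using xS(3) by (metis of_nat_le_iff of_nat_mult of_nat_numeral)
  also have "\<dots> \<le> 16 * (100 * (real (Q ?I ?f))^2)" using cS by simp
  finally have "(real n)^2 \<le> (40 * real (Q ?I ?f))^2" by (simp add: power2_eq_square)
  hence "real n \<le> 40 * real (Q ?I ?f)" by (rule power2_le_imp_le) simp
  thus "1/40 * real n \<le> real (Q ?I ?f)" by simp
qed


end
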